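(* Let $n\ge3$ and let $f$ be a $\gamma_{tr3}(P_3\square P_n)$-function such that the number of vertices $v$ with $f(v)=\emptyset$ is minimum among all $\gamma_{tr3}(P_3\square P_n)$-functions. If $j\in\{0,1,\dots,n-2\}$ satisfies $|f((1,j))|=2$, then $|f((1,j+1))|=|f((2,j))|=0$.
   Context: $P_m$ denotes the directed path with vertex set $\{0,1,\dots,m-1\}$ and arcs $(i,i+1)$ for $0\le i\le m-2$. The Cartesian product $D_1\square D_2$ has vertex set $V(D_1)\times V(D_2)$, with an arc from $(x_1,y_1)$ to $(x_2,y_2)$ iff either $(x_1,x_2)$ is an arc of $D_1$ and $y_1=y_2$, or $x_1=x_2$ and $(y_1,y_2)$ is an arc of $D_2$. For a digraph $D$ and positive integer $k$, a $k$-rainbow dominating function on $D$ is $f:V(D)\to\mathcal P(\{1,\dots,k\})$ such that every $v$ with $f(v)=\emptyset$ satisfies $\bigcup_{u\in N^-(v)}f(u)=\{1,\dots,k\}$, where $N^-(v)$ is the set of in-neighbors of $v$; its weight is $\sum_v|f(v)|$. It is total if additionally the subdigraph induced by $\{v:f(v)\ne\emptyset\}$ has no isolated vertex (a vertex with neither in- nor out-neighbors in it). $\gamma_{trk}(D)$ is the minimum weight of a total $k$-rainbow dominating function, and a $\gamma_{trk}(D)$-function is one attaining it. *)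

theory Defs
  imports Main
begin

(* A digraph is given by a vertex set Vs and an arc predicate A (A u v: arc from u to v). *)

definition path_vertices :: "nat \<Rightarrow> nat set" where
  "path_vertices m = {0..<m}"

definition path_arc :: "nat \<Rightarrow> nat \<Rightarrow> nat \<Rightarrow> bool" where
  "path_arc m i j \<longleftrightarrow> i + 1 = j \<and> j < m"

definition cart_vertices :: "'a set \<Rightarrow> 'b set \<Rightarrow> ('a \<times> 'b) set" where
  "cart_vertices V1 V2 = V1 \<times> V2"

definition cart_arc :: "('a \<Rightarrow> 'a \<Rightarrow> bool) \<Rightarrow> ('b \<Rightarrow> 'b \<Rightarrow> bool) \<Rightarrow> ('a \<times> 'b) \<Rightarrow> ('a \<times> 'b) \<Rightarrow> bool" where
  "cart_arc A1 A2 p q \<longleftrightarrow>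
     (A1 (fst p) (fst q) \<and> snd p = snd q) \<or> (fst p = fst q \<and> A2 (snd p) (snd q))"

definition in_nbrs :: "'v set \<Rightarrow> ('v \<Rightarrow> 'v \<Rightarrow> bool) \<Rightarrow> 'v \<Rightarrow> 'v set" where
  "in_nbrs Vs A v = {u \<in> Vs. A u v}"

definition rainbow_dom :: "'v set \<Rightarrow> ('v \<Rightarrow> 'v \<Rightarrow> bool) \<Rightarrow> nat \<Rightarrow> ('v \<Rightarrow> nat set) \<Rightarrow> bool" where
  "rainbow_dom Vs A k f \<longleftrightarrow>
     (\<forall>v\<in>Vs. f v \<subseteq> {1..k}) \<and>
     (\<forall>v\<in>Vs. f v = {} \<longrightarrow> (\<Union>u\<in>in_nbrs Vs A v. f u) = {1..k})"

(* total: the subdigraph induced by vertices with nonempty label has no isolated vertex *)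
definition total_rainbow_dom :: "'v set \<Rightarrow> ('v \<Rightarrow> 'v \<Rightarrow> bool) \<Rightarrow> nat \<Rightarrow> ('v \<Rightarrow> nat set) \<Rightarrow> bool" where
  "total_rainbow_dom Vs A k f \<longleftrightarrow>
     rainbow_dom Vs A k f \<and>
     (\<forall>v\<in>Vs. f v \<noteq> {} \<longrightarrow> (\<exists>u\<in>Vs. u \<noteq> v \<and> f u \<noteq> {} \<and> (A u v \<or> A v u)))"

definition rd_weight :: "'v set \<Rightarrow> ('v \<Rightarrow> nat set) \<Rightarrow> nat" where
  "rd_weight Vs f = (\<Sum>v\<in>Vs. card (f v))"

definition gamma_trk :: "'v set \<Rightarrow> ('v \<Rightarrow> 'v \<Rightarrow> bool) \<Rightarrow> nat \<Rightarrow> nat" where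
  "gamma_trk Vs A k = (LEAST w. \<exists>f. total_rainbow_dom Vs A k f \<and> rd_weight Vs f = w)"

definition is_gamma_trk_fun :: "'v set \<Rightarrow> ('v \<Rightarrow> 'v \<Rightarrow> bool) \<Rightarrow> nat \<Rightarrow> ('v \<Rightarrow> nat set) \<Rightarrow> bool" where
  "is_gamma_trk_fun Vs A k f \<longleftrightarrow>
     total_rainbow_dom Vs A k f \<and> rd_weight Vs f = gamma_trk Vs A k"

abbreviation grid_V :: "nat \<Rightarrow> (nat \<times> nat) set" where
  "grid_V n \<equiv> cart_vertices (path_vertices 3) (path_vertices n)"

abbreviation grid_A :: "nat \<Rightarrow> (nat \<times> nat) \<Rightarrow> (nat \<times> nat) \<Rightarrow> bool" where
  "grid_A n \<equiv> cart_arc (path_arc 3) (path_arc n)"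

end

theory Submission
  imports Defs
begin

lemma modify_trd:
  assumes trd: "total_rainbow_dom V A k f" and pV: "p \<in> V"
    and gp: "g p \<noteq> {}" "g p \<subseteq> f p"
    and oth: "\<forall>u\<in>V. u \<noteq> p \<longrightarrow> f u \<subseteq> g u \<and> g u \<subseteq> {1..k}"
    and outp: "\<forall>v\<in>V. A p v \<longrightarrow> g v \<noteq> {}"
    and new: "\<forall>v\<in>V. f v = {} \<longrightarrow> g v \<noteq> {} \<longrightarrow> A p v \<and> v \<noteq> p"
  shows "total_rainbow_dom V A k g"
proof -
  have fsub: "\<forall>v\<in>V. f v \<subseteq> {1..k}" and fdom: "\<forall>v\<in>V. f v = {} \<longrightarrow> (\<Union>u\<in>in_nbrs V A v. f u) = {1..k}"
    and ftot: "\<forall>v\<in>V. f v \<noteq> {} \<longrightarrow> (\<exists>u\<in>V. u \<noteq> v \<and> f u \<noteq> {} \<and> (A u v \<or> A v u))"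
    using trd unfolding total_rainbow_dom_def rainbow_dom_def by auto
  have gsub: "\<forall>v\<in>V. g v \<subseteq> {1..k}"
  proof
    fix v assume "v \<in> V" thus "g v \<subseteq> {1..k}"
      using oth gp(2) fsub pV by (cases "v = p") auto
  qed
  have fg: "\<forall>u\<in>V. f u \<noteq> {} \<longrightarrow> g u \<noteq> {}"
  proof (intro ballI impI)
    fix u assume "u \<in> V" "f u \<noteq> {}" thus "g u \<noteq> {}"
      using oth gp(1) by (cases "u = p") auto
  qed
  have dom: "\<forall>v\<in>V. g v = {} \<longrightarrow> (\<Union>u\<in>in_nbrs V A v. g u) = {1..k}"
  proof (intro ballI impI)
    fix v assume vV: "v \<in> V" and gv: "g v = {}"
    have vp: "v \<noteq> p" using gv gp by auto
    have fv: "f v = {}" using oth vV vp gv by auto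
    have nA: "\<not> A p v" using outp vV gv by auto
    have pn: "p \<notin> in_nbrs V A v" using nA unfolding in_nbrs_def by auto
    have "(\<Union>u\<in>in_nbrs V A v. f u) \<subseteq> (\<Union>u\<in>in_nbrs V A v. g u)"
    proof (rule UN_mono)
      fix u assume "u \<in> in_nbrs V A v"
      thus "f u \<subseteq> g u" using pn oth unfolding in_nbrs_def by (cases "u = p") auto
    qed simp
    moreover have "(\<Union>u\<in>in_nbrs V A v. g u) \<subseteq> {1..k}"
      using gsub unfolding in_nbrs_def by auto
    ultimately show "(\<Union>u\<in>in_nbrs V A v. g u) = {1..k}" using fdom vV fv by auto
  qed
  have tot: "\<forall>v\<in>V. g v \<noteq> {} \<longrightarrow> (\<exists>u\<in>V. u \<noteq> v \<and> g u \<noteq> {} \<and> (A u v \<or> A v u))"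
  proof (intro ballI impI)
    fix v assume vV: "v \<in> V" and gv: "g v \<noteq> {}"
    show "\<exists>u\<in>V. u \<noteq> v \<and> g u \<noteq> {} \<and> (A u v \<or> A v u)"
    proof (cases "f v = {}")
      case True
      then have "A p v \<and> v \<noteq> p" using new vV gv by auto
      then show ?thesis using pV gp by auto
    next
      case False
      then obtain u where "u \<in> V" "u \<noteq> v" "f u \<noteq> {}" "A u v \<or> A v u" using ftot vV by auto
      then show ?thesis using fg by auto
    qed
  qed
  show ?thesis unfolding total_rainbow_dom_def rainbow_dom_def using gsub dom tot by auto
qed

lemma weight_upd:
  assumes "finite V" "p \<in> V"
  shows "rd_weight V (f(p:=S)) + card (f p) = rd_weight V f + card S"
proof -
  have e: "(\<Sum>v\<in>V - {p}. card ((f(p:=S)) v)) = (\<Sum>v\<in>V - {p}. card (f v))"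
    by (rule sum.cong) auto
  show ?thesis unfolding rd_weight_def
    using sum.remove[OF assms, of "\<lambda>v. card ((f(p:=S)) v)"] sum.remove[OF assms, of "\<lambda>v. card (f v)"] e
    by simp
qed

lemma grid_arc: "grid_A n p q \<longleftrightarrow>
   (fst p + 1 = fst q \<and> fst q < 3 \<and> snd p = snd q) \<or> (fst p = fst q \<and> snd p + 1 = snd q \<and> snd q < n)"
  unfolding cart_arc_def path_arc_def by auto

lemma grid_mem: "x \<in> grid_V n \<longleftrightarrow> fst x < 3 \<and> snd x < n"
  unfolding cart_vertices_def path_vertices_def by (cases x) auto

theorem lemma4p9:
  fixes n j :: nat and f :: "nat \<times> nat \<Rightarrow> nat set"
  assumes "n \<ge> 3"
    and "is_gamma_trk_fun (grid_V n) (grid_A n) 3 f"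
    and "\<forall>g. is_gamma_trk_fun (grid_V n) (grid_A n) 3 g \<longrightarrow>
           card {v \<in> grid_V n. f v = {}} \<le> card {v \<in> grid_V n. g v = {}}"
    and "j \<le> n - 2"
    and "card (f (1, j)) = 2"
  shows "card (f (1, j + 1)) = 0 \<and> card (f (2, j)) = 0"
proof (rule ccontr)
  let ?V = "grid_V n" and ?A = "grid_A n"
  assume neg: "\<not> (card (f (1, j + 1)) = 0 \<and> card (f (2, j)) = 0)"
  have finV: "finite ?V" unfolding cart_vertices_def path_vertices_def by auto
  have trd: "total_rainbow_dom ?V ?A 3 f" and wf: "rd_weight ?V f = gamma_trk ?V ?A 3"
    using assms(2) unfolding is_gamma_trk_fun_def by auto
  have fsub: "\<forall>v\<in>?V. f v \<subseteq> {1..3}" using trd unfolding total_rainbow_dom_def rainbow_dom_def by auto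
  have p: "(1,j) \<in> ?V" and q1: "(1,j+1) \<in> ?V" and q2: "(2,j) \<in> ?V"
    using assms(1,4) by (auto simp: grid_mem)
  obtain a b where ab: "a \<noteq> b" "f (1,j) = {a,b}" using assms(5) card_2_iff by metis
  have abs: "a \<in> {1..3}" "b \<in> {1..3}" using fsub p ab by auto
  have fin: "\<forall>v\<in>?V. finite (f v)" using fsub finite_subset by blast
  have ne: "f (1,j+1) \<noteq> {} \<or> f (2,j) \<noteq> {}" using neg by auto
  have outs: "\<And>v. v \<in> ?V \<Longrightarrow> ?A (1,j) v \<Longrightarrow> v = (2,j) \<or> v = (1,j+1)"
    by (auto simp: grid_arc)
  have minc: "\<And>g w. total_rainbow_dom ?V ?A 3 g \<Longrightarrow> rd_weight ?V g = rd_weight ?V f \<Longrightarrow>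
     w \<in> ?V \<Longrightarrow> f w = {} \<Longrightarrow> {v \<in> ?V. g v = {}} = {v \<in> ?V. f v = {}} - {w} \<Longrightarrow> False"
  proof -
    fix g w assume t: "total_rainbow_dom ?V ?A 3 g" and w: "rd_weight ?V g = rd_weight ?V f"
      and wV: "w \<in> ?V" and fw: "f w = {}" and e: "{v \<in> ?V. g v = {}} = {v \<in> ?V. f v = {}} - {w}"
    have "is_gamma_trk_fun ?V ?A 3 g" using t w wf unfolding is_gamma_trk_fun_def by simp
    hence "card {v \<in> ?V. f v = {}} \<le> card {v \<in> ?V. g v = {}}" using assms(3) by blast
    moreover have "card ({v \<in> ?V. f v = {}} - {w}) < card {v \<in> ?V. f v = {}}"
      by (rule card_Diff1_less) (use finV wV fw in auto)
    ultimately show False using e by simp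
  qed
  show False
  proof (cases "f (1,j+1) \<noteq> {} \<and> f (2,j) \<noteq> {}")
    case True
    let ?g = "f((1,j) := {a})"
    have t: "total_rainbow_dom ?V ?A 3 ?g"
    proof (rule modify_trd[OF trd p])
      show "\<forall>v\<in>?V. ?A (1,j) v \<longrightarrow> ?g v \<noteq> {}"
      proof (intro ballI impI)
        fix v assume "v \<in> ?V" "?A (1,j) v"
        hence "v = (2,j) \<or> v = (1,j+1)" using outs by blast
        thus "?g v \<noteq> {}" using True by auto
      qed
    qed (use ab fsub in auto)
    have "rd_weight ?V ?g + 2 = rd_weight ?V f + 1"
      using weight_upd[OF finV p, of f "{a}"] ab by simp
    moreover have "gamma_trk ?V ?A 3 \<le> rd_weight ?V ?g"
      unfolding gamma_trk_def by (rule Least_le) (use t in blast)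
    ultimately show False using wf by simp
  next
    case False
    have "\<exists>w::nat\<times>nat. (w = (2,j) \<and> f (2,j) = {} \<and> f (1,j+1) \<noteq> {}) \<or> (w = (1,j+1) \<and> f (1,j+1) = {} \<and> f (2,j) \<noteq> {})"
      using False ne by blast
    then obtain w :: "nat \<times> nat" where w0: "(w = (2,j) \<and> f (2,j) = {} \<and> f (1,j+1) \<noteq> {}) \<or> (w = (1,j+1) \<and> f (1,j+1) = {} \<and> f (2,j) \<noteq> {})"
      by blast
    have w: "w = (2,j) \<or> w = (1,j+1)" "f w = {}" "f (2,j) \<noteq> {} \<or> f (1,j+1) \<noteq> {}"
      "w = (2,j) \<longrightarrow> f (1,j+1) \<noteq> {}" "w = (1,j+1) \<longrightarrow> f (2,j) \<noteq> {}"
      using w0 by auto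
    have wV: "w \<in> ?V" using w q1 q2 by auto
    have wp: "w \<noteq> (1,j)" using w by auto
    let ?g = "f((1,j) := {a}, w := {b})"
    have t: "total_rainbow_dom ?V ?A 3 ?g"
    proof (rule modify_trd[OF trd p])
      show "?g (1,j) \<noteq> {}" using wp by simp
      show "?g (1,j) \<subseteq> f (1,j)" using wp ab by simp
      show "\<forall>u\<in>?V. u \<noteq> (1,j) \<longrightarrow> f u \<subseteq> ?g u \<and> ?g u \<subseteq> {1..3}"
      proof (intro ballI impI)
        fix u assume "u \<in> ?V" "u \<noteq> (1,j)"
        thus "f u \<subseteq> ?g u \<and> ?g u \<subseteq> {1..3}" using fsub abs w(2) by (cases "u = w") auto
      qed
      show "\<forall>v\<in>?V. ?A (1,j) v \<longrightarrow> ?g v \<noteq> {}"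
      proof (intro ballI impI)
        fix v assume "v \<in> ?V" "?A (1,j) v"
        hence v: "v = (2,j) \<or> v = (1,j+1)" using outs by blast
        show "?g v \<noteq> {}"
        proof (cases "v = w")
          case True thus ?thesis by simp
        next
          case False
          hence "f v \<noteq> {}" using v w(1,4,5) by auto
          thus ?thesis using False v by auto
        qed
      qed
      show "\<forall>v\<in>?V. f v = {} \<longrightarrow> ?g v \<noteq> {} \<longrightarrow> ?A (1,j) v \<and> v \<noteq> (1,j)"
      proof (intro ballI impI)
        fix v assume vV: "v \<in> ?V" and fv: "f v = {}" and gv: "?g v \<noteq> {}"
        have "v \<noteq> (1,j)" using fv ab by auto
        hence "v = w" using fv gv by (cases "v = w") auto
        moreover have "?A (1,j) w" using w(1) q1 by (auto simp: grid_arc grid_mem)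
        ultimately show "?A (1,j) v \<and> v \<noteq> (1,j)" using wp by simp
      qed
    qed
    have "rd_weight ?V (f((1,j) := {a})) + 2 = rd_weight ?V f + 1"
      using weight_upd[OF finV p, of f "{a}"] ab by simp
    moreover have "rd_weight ?V ?g + card (f w) = rd_weight ?V (f((1,j) := {a})) + 1"
      using weight_upd[OF finV wV, of "f((1,j) := {a})" "{b}"] wp by simp
    ultimately have ww: "rd_weight ?V ?g = rd_weight ?V f" using w by simp
    have e: "{v \<in> ?V. ?g v = {}} = {v \<in> ?V. f v = {}} - {w}" using ab wp by auto
    show False using minc[OF t ww wV w(2) e] .
  qed
qed

end
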